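(* Assume $\mathbb{E}\min(Z,W)=\infty$ and $\sum_{n\ge0} r_n^2<\infty$. Then $\Lambda_n\to\infty$ in probability as $n\to\infty$.
   Context: Let $Z,W,(Z_n)_{n\ge1},(W_n)_{n\ge1}$ be independent, identically distributed random variables taking values in $\mathbb{N}=\{1,2,3,\dots\}$. Define sets $T_n\subset\mathbb{Z}$ recursively by $T_n=\{n\}$ for $n\le 0$ and $T_n=\{n\}\cup T_{n-Z_n}\cup T_{n-W_n}$ for $n\ge1$. Let $\mathcal{L}_n=T_n\cap\{0,-1,-2,\dots\}$ and $\Lambda_n=|\mathcal{L}_n|$. Define the $Z$-chain $T^Z_n=\{n\}$ for $n\le0$ and $T^Z_n=\{n\}\cup T^Z_{n-Z_n}$ for $n\ge1$. Let $r_0=1$ and $r_n=\mathbb{P}(0\in T^Z_n)$ for $n\ge1$; equivalently $r_n=\sum_{i=1}^n q_i r_{n-i}$ with $q_i=\mathbb{P}(Z=i)$. *)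

theory Defs
  imports "HOL-Probability.Probability"
begin

text \<open>Given realisations z, w of the
sequences (Z_n), (W_n) (values at indices n >= 1 are used), the set
T_n is defined by T_n = {n} for n <= 0 and
T_n = {n} \<union> T_(n - z n) \<union> T_(n - w n) for n >= 1.
We define it as the least set closed under these rules; since z n, w n >= 1
this is exactly the recursive definition.\<close>

inductive inT :: "(nat \<Rightarrow> nat) \<Rightarrow> (nat \<Rightarrow> nat) \<Rightarrow> int \<Rightarrow> int \<Rightarrow> bool"
  for z w :: "nat \<Rightarrow> nat" where
  self: "inT z w n n"
| viaZ: "n \<ge> 1 \<Longrightarrow> inT z w (n - int (z (nat n))) m \<Longrightarrow> inT z w n m"
| viaW: "n \<ge> 1 \<Longrightarrow> inT z w (n - int (w (nat n))) m \<Longrightarrow> inT z w n m"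

definition Tset :: "(nat \<Rightarrow> nat) \<Rightarrow> (nat \<Rightarrow> nat) \<Rightarrow> int \<Rightarrow> int set" where
  "Tset z w n = {m. inT z w n m}"

definition Lambda :: "(nat \<Rightarrow> nat) \<Rightarrow> (nat \<Rightarrow> nat) \<Rightarrow> int \<Rightarrow> nat" where
  "Lambda z w n = card (Tset z w n \<inter> {..0})"

inductive inTZ :: "(nat \<Rightarrow> nat) \<Rightarrow> int \<Rightarrow> int \<Rightarrow> bool"
  for z :: "nat \<Rightarrow> nat" where
  self: "inTZ z n n"
| viaZ: "n \<ge> 1 \<Longrightarrow> inTZ z (n - int (z (nat n))) m \<Longrightarrow> inTZ z n m"

definition TZset :: "(nat \<Rightarrow> nat) \<Rightarrow> int \<Rightarrow> int set" where
  "TZset z n = {m. inTZ z n m}"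

end

theory Submission
  imports Defs
begin

fun valid :: "int \<Rightarrow> nat list \<Rightarrow> bool" where
  "valid a [] = True"
| "valid a (j # js) = (1 \<le> a \<and> 1 \<le> j \<and> valid (a - int j) js)"

fun endp :: "int \<Rightarrow> nat list \<Rightarrow> int" where
  "endp a [] = a"
| "endp a (j # js) = endp (a - int j) js"

fun nodes :: "int \<Rightarrow> nat list \<Rightarrow> int set" where
  "nodes a [] = {}"
| "nodes a (j # js) = insert a (nodes (a - int j) js)"

fun gr :: "bool \<Rightarrow> int \<Rightarrow> nat list \<Rightarrow> ((bool \<times> nat) \<times> nat) set" where
  "gr b a [] = {}"
| "gr b a (j # js) = insert ((b, nat a), j) (gr b (a - int j) js)"

fun pathfol :: "(nat \<Rightarrow> nat) \<Rightarrow> int \<Rightarrow> nat list \<Rightarrow> bool" where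
  "pathfol z a [] = True"
| "pathfol z a (j # js) = (z (nat a) = j \<and> pathfol z (a - int j) js)"

primrec ch :: "(nat \<Rightarrow> nat) \<Rightarrow> int \<Rightarrow> nat \<Rightarrow> int" where
  "ch z a 0 = a"
| "ch z a (Suc k) = (if 1 \<le> a then ch z (a - int (z (nat a))) k else a)"

primrec cpath :: "(nat \<Rightarrow> nat) \<Rightarrow> int \<Rightarrow> nat \<Rightarrow> nat list" where
  "cpath z a 0 = []"
| "cpath z a (Suc k) = (if 1 \<le> a then z (nat a) # cpath z (a - int (z (nat a))) k else [])"

lemma endp_eq: "endp a js = a - int (sum_list js)"
  by (induction js arbitrary: a) auto

lemma valid_append: "valid a (xs @ ys) = (valid a xs \<and> valid (endp a xs) ys)"
  by (induction xs arbitrary: a) auto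

lemma valid_elems: "valid a js \<Longrightarrow> j \<in> set js \<Longrightarrow> 1 \<le> j"
  by (induction js arbitrary: a) auto

lemma valid_len: "valid a js \<Longrightarrow> length js \<le> sum_list js"
proof (induction js arbitrary: a)
  case (Cons j js) then show ?case by fastforce
qed auto

lemma valid_endp_le: "valid a js \<Longrightarrow> endp a js + int (length js) \<le> a"
  using valid_len[of a js] by (simp add: endp_eq)

lemma valid_nodes: "valid a js \<Longrightarrow> x \<in> nodes a js \<Longrightarrow> endp a js < x \<and> x \<le> a \<and> 1 \<le> x"
proof (induction js arbitrary: a)
  case (Cons j js)
  show ?case
  proof (cases "x = a")
    case True
    with Cons.prems valid_endp_le[of "a - int j" js] show ?thesis by auto
  next
    case False
    with Cons.prems Cons.IH[of "a - int j"] show ?thesis by auto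
  qed
qed auto

lemma gr_fst: "(s, v) \<in> gr b a js \<Longrightarrow> \<exists>x \<in> nodes a js. s = (b, nat x)"
  by (induction js arbitrary: a) auto

lemma finite_gr: "finite (gr b a js)"
  by (induction js arbitrary: a) auto

lemma gr_functional: "valid a js \<Longrightarrow> (s, v) \<in> gr b a js \<Longrightarrow> (s, v') \<in> gr b a js \<Longrightarrow> v = v'"
proof (induction js arbitrary: a)
  case (Cons j js)
  have nin: "\<And>v. ((b, nat a), v) \<notin> gr b (a - int j) js"
  proof
    fix v assume "((b, nat a), v) \<in> gr b (a - int j) js"
    then obtain x where x: "x \<in> nodes (a - int j) js" "nat a = nat x" using gr_fst by fastforce
    from valid_nodes[OF _ x(1)] Cons.prems(1) have "x \<le> a - int j" "1 \<le> x" by auto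
    with x(2) Cons.prems(1) show False by auto
  qed
  from Cons.prems nin Cons.IH[of "a - int j"] show ?case by auto
qed auto

lemma ch_Suc: "ch z a (Suc k) = (if 1 \<le> ch z a k then ch z a k - int (z (nat (ch z a k))) else ch z a k)"
proof (induction k arbitrary: a)
  case 0 then show ?case by simp
next
  case (Suc k)
  show ?case
  proof (cases "1 \<le> a")
    case True
    have e1: "ch z a (Suc (Suc k)) = ch z (a - int (z (nat a))) (Suc k)" using True by simp
    have e2: "ch z a (Suc k) = ch z (a - int (z (nat a))) k" using True by simp
    show ?thesis unfolding e1 e2 by (rule Suc)
  next
    case False then show ?thesis by simp
  qed
qed

lemma ch_nonpos: "ch z a k \<le> 0 \<Longrightarrow> ch z a (k + i) = ch z a k"
proof (induction i)
  case (Suc i)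
  have "ch z a (k + Suc i) = ch z a (Suc (k + i))" by simp
  also have "\<dots> = ch z a (k + i)" unfolding ch_Suc[of z a "k + i"] using Suc by simp
  finally show ?case using Suc by simp
qed simp

lemma ch_mono_Suc: "ch z a (Suc k) \<le> ch z a k"
  using ch_Suc[of z a k] by simp

lemma ch_mono: "k \<le> k' \<Longrightarrow> ch z a k' \<le> ch z a k"
proof (induction k' rule: dec_induct)
  case (step n) then show ?case using ch_mono_Suc[of z a n] by simp
qed simp

lemma ch_strict: "(\<forall>i. 1 \<le> z i) \<Longrightarrow> 1 \<le> ch z a k \<Longrightarrow> ch z a (Suc k) < ch z a k"
proof -
  assume p: "\<forall>i. 1 \<le> z i" and c: "1 \<le> ch z a k"
  have "1 \<le> z (nat (ch z a k))" using p by blast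
  then show ?thesis using ch_Suc[of z a k] c by simp
qed

lemma ch_land_aux: "(\<forall>i. 1 \<le> z i) \<Longrightarrow> ch z a k \<le> 0 \<or> ch z a k \<le> a - int k"
proof (induction k)
  case (Suc k)
  show ?case
  proof (cases "1 \<le> ch z a k")
    case True
    with ch_strict[OF Suc.prems True] Suc show ?thesis by auto
  next
    case False then show ?thesis using ch_Suc[of z a k] by simp
  qed
qed auto

lemma ch_land: "(\<forall>i. 1 \<le> z i) \<Longrightarrow> ch z a (nat a + 1) \<le> 0"
  using ch_land_aux[of z a "nat a + 1"] by auto

lemma cpath_valid: "(\<forall>i. 1 \<le> z i) \<Longrightarrow> valid a (cpath z a k)"
  by (induction k arbitrary: a) auto

lemma cpath_endp: "endp a (cpath z a k) = ch z a k"
  by (induction k arbitrary: a) auto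

lemma cpath_fol: "pathfol z a (cpath z a k)"
  by (induction k arbitrary: a) auto

lemma cpath_nodes: "x \<in> nodes a (cpath z a k) \<Longrightarrow> \<exists>k' < k. x = ch z a k'"
proof (induction k arbitrary: a)
  case (Suc k)
  show ?case
  proof (cases "1 \<le> a")
    case True
    show ?thesis
    proof (cases "x = a")
      case True then show ?thesis by (intro exI[of _ 0]) auto
    next
      case False
      with True Suc.prems obtain k' where "k' < k" "x = ch z (a - int (z (nat a))) k'"
        using Suc.IH by auto
      with True show ?thesis by (intro exI[of _ "Suc k'"]) auto
    qed
  next
    case False with Suc.prems show ?thesis by simp
  qed
qed simp

lemma cpath_length: "(\<forall>k' < k. 1 \<le> ch z a k') \<Longrightarrow> length (cpath z a k) = k"
proof (induction k arbitrary: a)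
  case (Suc k)
  from Suc.prems have a: "1 \<le> a" by (metis ch.simps(1) zero_less_Suc)
  have "\<forall>k' < k. 1 \<le> ch z (a - int (z (nat a))) k'"
    using Suc.prems a by (metis Suc_mono ch.simps(2))
  with Suc.IH a show ?case by simp
qed simp

lemma cpath_take: "k \<le> k' \<Longrightarrow> take k (cpath z a k') = cpath z a k"
proof (induction k arbitrary: a k')
  case (Suc k)
  then obtain k'' where "k' = Suc k''" "k \<le> k''" by (cases k') auto
  with Suc show ?case by auto
qed simp

lemma prefix_fol: "valid a js1 \<Longrightarrow> valid a js2 \<Longrightarrow> pathfol z a js1 \<Longrightarrow> pathfol z a js2 \<Longrightarrow>
  (\<exists>t. js2 = js1 @ t) \<or> (\<exists>t. js1 = js2 @ t)"
proof (induction js1 arbitrary: a js2)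
  case (Cons j js1)
  then show ?case
  proof (cases js2)
    case (Cons j2 js2')
    with Cons.prems have "j2 = j" by auto
    with Cons.prems Cons.IH[of "a - int j" js2'] Cons show ?thesis by auto
  qed auto
qed auto

lemma fol_eq_len: "valid a js1 \<Longrightarrow> valid a js2 \<Longrightarrow> pathfol z a js1 \<Longrightarrow> pathfol z a js2 \<Longrightarrow>
  length js1 = length js2 \<Longrightarrow> js1 = js2"
  using prefix_fol by fastforce

lemma fol_eq_land: "valid a js1 \<Longrightarrow> valid a js2 \<Longrightarrow> pathfol z a js1 \<Longrightarrow> pathfol z a js2 \<Longrightarrow>
  endp a js1 \<le> 0 \<Longrightarrow> endp a js2 \<le> 0 \<Longrightarrow> js1 = js2"
proof -
  assume h: "valid a js1" "valid a js2" "pathfol z a js1" "pathfol z a js2" "endp a js1 \<le> 0" "endp a js2 \<le> 0"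
  have aux: "valid a (xs @ t) \<Longrightarrow> endp a xs \<le> 0 \<Longrightarrow> t = []" for xs t
    by (cases t) (auto simp: valid_append)
  from prefix_fol[OF h(1-4)] show ?thesis
    using aux h by fastforce
qed

lemma inTZ_ch: "inTZ z a m \<Longrightarrow> \<exists>k. ch z a k = m"
proof (induction rule: inTZ.induct)
  case (self n) then show ?case by (intro exI[of _ 0]) auto
next
  case (viaZ n m)
  then obtain k where "ch z (n - int (z (nat n))) k = m" by auto
  with viaZ show ?case by (intro exI[of _ "Suc k"]) auto
qed

lemma fol_inTZ: "valid a js \<Longrightarrow> pathfol z a js \<Longrightarrow> inTZ z a (endp a js)"
  by (induction js arbitrary: a) (auto intro: inTZ.intros)

lemma ch_inTZ: "inTZ z a (ch z a k)"
  by (induction k arbitrary: a) (auto intro: inTZ.intros)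

lemma inTZ_W_inT: "inTZ w s m \<Longrightarrow> inT z w s m"
  by (induction rule: inTZ.induct) (auto intro: inT.intros)

lemma inTZ_Z_inT: "inTZ z n s \<Longrightarrow> inT z w s m \<Longrightarrow> inT z w n m"
  by (induction rule: inTZ.induct) (auto intro: inT.intros)

lemma Tset_finite:
  assumes pz: "\<forall>i. 1 \<le> z i" and pw: "\<forall>i. 1 \<le> w i"
  shows "finite (Tset z w n)"
proof -
  have "\<forall>n. nat n \<le> k \<longrightarrow> finite (Tset z w n)" for k
  proof (induction k rule: less_induct)
    case (less k)
    show ?case
    proof (intro allI impI)
      fix n assume nk: "nat n \<le> k"
      show "finite (Tset z w n)"
      proof (cases "1 \<le> n")
        case False
        have "Tset z w n \<subseteq> {n}"
          using False by (auto simp: Tset_def elim: inT.cases)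
        then show ?thesis using finite_subset by blast
      next
        case True
        have "Tset z w n \<subseteq> insert n (Tset z w (n - int (z (nat n))) \<union> Tset z w (n - int (w (nat n))))"
          by (auto simp: Tset_def elim: inT.cases)
        moreover have "finite (Tset z w (n - int (z (nat n))))"
          using less[of "nat (n - int (z (nat n)))"] True nk pz[rule_format, of "nat n"] by auto
        moreover have "finite (Tset z w (n - int (w (nat n))))"
          using less[of "nat (n - int (w (nat n)))"] True nk pw[rule_format, of "nat n"] by auto
        ultimately show ?thesis using finite_subset by blast
      qed
    qed
  qed
  then show ?thesis by blast
qed

lemma first_meet:
  assumes "ch w a i = ch w b j"
  shows "\<exists>i0 j0. ch w a i0 = ch w b j0 \<and> nodes a (cpath w a i0) \<inter> nodes b (cpath w b j0) = {}"
proof -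
  define P where "P = (\<lambda>i. \<exists>j. ch w a i = ch w b j)"
  have Pi: "P i" using assms P_def by auto
  define i0 where "i0 = (LEAST i. P i)"
  have "P i0" unfolding i0_def by (rule LeastI[of P i, OF Pi])
  then obtain j0 where j0: "ch w a i0 = ch w b j0" unfolding P_def by auto
  have "nodes a (cpath w a i0) \<inter> nodes b (cpath w b j0) = {}"
  proof (rule ccontr)
    assume "nodes a (cpath w a i0) \<inter> nodes b (cpath w b j0) \<noteq> {}"
    then obtain x where x1: "x \<in> nodes a (cpath w a i0)" and x2: "x \<in> nodes b (cpath w b j0)" by blast
    from cpath_nodes[OF x1] obtain k1 where k1: "k1 < i0" "x = ch w a k1" by auto
    from cpath_nodes[OF x2] obtain k2 where k2: "x = ch w b k2" by auto
    have "P k1" unfolding P_def using k1 k2 by metis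
    then have "i0 \<le> k1" unfolding i0_def by (rule Least_le)
    with k1 show False by simp
  qed
  with j0 show ?thesis by blast
qed

lemma finite_valid: "finite {js. valid a js \<and> c \<le> endp a js}"
proof -
  have "{js. valid a js \<and> c \<le> endp a js} \<subseteq> {js. set js \<subseteq> {..nat (a - c)} \<and> length js \<le> nat (a - c)}"
  proof
    fix js assume "js \<in> {js. valid a js \<and> c \<le> endp a js}"
    then have v: "valid a js" and c: "c \<le> endp a js" by auto
    have s: "int (sum_list js) \<le> a - c" using c by (simp add: endp_eq)
    have l: "length js \<le> nat (a - c)" using valid_len[OF v] s by linarith
    have "\<forall>x\<in>set js. x \<le> sum_list js" by (simp add: member_le_sum_list)
    then have "set js \<subseteq> {..nat (a - c)}" using s by auto
    with l show "js \<in> {js. set js \<subseteq> {..nat (a - c)} \<and> length js \<le> nat (a - c)}" by simp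
  qed
  moreover have "finite {js. set js \<subseteq> {..nat (a - c)} \<and> length js \<le> nat (a - c)}"
    using finite_lists_length_le[of "{..nat (a - c)}" "nat (a - c)"] by simp
  ultimately show ?thesis by (rule finite_subset)
qed

lemma finite_Pth: "finite {js. valid a js \<and> endp a js = m}"
  by (rule finite_subset[OF _ finite_valid[of a m]]) auto

lemma Pth_shift: "0 \<le> m \<Longrightarrow> (valid a js \<and> endp a js = m) = (valid (a - m) js \<and> endp (a - m) js = 0)"
proof (induction js arbitrary: a)
  case Nil then show ?case by auto
next
  case (Cons j js)
  have IH: "(valid (a - int j) js \<and> endp (a - int j) js = m) = (valid (a - int j - m) js \<and> endp (a - int j - m) js = 0)"
    using Cons by blast
  show ?case
  proof
    assume h: "valid a (j # js) \<and> endp a (j # js) = m"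
    then have "valid (a - int j - m) js \<and> endp (a - int j - m) js = 0" using IH by auto
    moreover have "a - int j \<ge> m" using h valid_endp_le[of "a - int j" js] by auto
    ultimately show "valid (a - m) (j # js) \<and> endp (a - m) (j # js) = 0" using h
      by (auto simp: algebra_simps)
  next
    assume h: "valid (a - m) (j # js) \<and> endp (a - m) (j # js) = 0"
    then have "valid (a - int j - m) js \<and> endp (a - int j - m) js = 0" by (auto simp: algebra_simps)
    then have "valid (a - int j) js \<and> endp (a - int j) js = m" using IH by auto
    then show "valid a (j # js) \<and> endp a (j # js) = m" using h Cons.prems by auto
  qed
qed

lemma valid_snoc_decomp:
  assumes "1 \<le> b" "m \<le> 0" "valid b js" "endp b js = m"
  shows "\<exists>k js'. js = js' @ [nat (k - m)] \<and> 1 \<le> k \<and> k \<le> b \<and> valid b js' \<and> endp b js' = k"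
proof -
  have "js \<noteq> []" using assms by auto
  then obtain js' j where js: "js = js' @ [j]" by (metis rev_exhaust)
  define k where "k = endp b js'"
  have v: "valid b js'" "valid k [j]" using assms(3) js by (auto simp: valid_append k_def)
  have e: "endp k [j] = m" using assms(4) js k_def by (simp add: endp_eq)
  have "k \<le> b" using valid_endp_le[OF v(1)] k_def by simp
  moreover have "j = nat (k - m)" using e v(2) by auto
  ultimately show ?thesis using js v e k_def by (intro exI[of _ k] exI[of _ js']) auto
qed

lemma take_endp_gap:
  assumes "valid n zs" "k \<le> length zs"
  shows "endp n zs + int (length zs - k) \<le> endp n (take k zs)"
proof -
  have v: "valid (endp n (take k zs)) (drop k zs)"
    using assms(1) valid_append[of n "take k zs" "drop k zs"] by simp
  have "endp n zs = endp (endp n (take k zs)) (drop k zs)"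
    by (metis append_take_drop_id endp_eq diff_diff_eq sum_list_append of_nat_add)
  with valid_endp_le[OF v] show ?thesis by simp
qed

lemma gr_notin: "valid a (j # js) \<Longrightarrow> ((b, nat a), v) \<notin> gr b (a - int j) js"
proof
  assume v: "valid a (j # js)" and "((b, nat a), v) \<in> gr b (a - int j) js"
  then obtain x where x: "x \<in> nodes (a - int j) js" "nat a = nat x" using gr_fst by fastforce
  from valid_nodes[OF _ x(1)] v have "x \<le> a - int j" "1 \<le> x" by auto
  with x(2) v show False by auto
qed

lemma gr_fst_img: "fst ` gr b a js = (\<lambda>x. (b, nat x)) ` nodes a js"
  by (induction js arbitrary: a) auto

lemma gr_fst_b: "p \<in> gr b a js \<Longrightarrow> fst (fst p) = b"
  by (induction js arbitrary: a) auto


definition fnl :: "('s \<times> 'v) set \<Rightarrow> bool" where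
  "fnl A \<longleftrightarrow> (\<forall>s v v'. (s, v) \<in> A \<longrightarrow> (s, v') \<in> A \<longrightarrow> v = v')"

lemma fnl_gr: "valid a js \<Longrightarrow> fnl (gr b a js)"
  unfolding fnl_def using gr_functional by blast

lemma fnl_Un: "fnl A \<Longrightarrow> fnl B \<Longrightarrow> fst ` A \<inter> fst ` B = {} \<Longrightarrow> fnl (A \<union> B)"
  unfolding fnl_def by (auto simp: image_iff) (metis fst_conv disjoint_iff image_eqI)+

locale thm6 =
  fixes M :: "'a measure" and Zs Ws :: "nat \<Rightarrow> 'a \<Rightarrow> nat"
  assumes P: "prob_space M"
    and indep: "prob_space.indep_vars M (\<lambda>_. count_space UNIV)
                  (\<lambda>(b, i). if b then Zs i else Ws i) (UNIV :: (bool \<times> nat) set)"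
    and distZ: "\<And>i. distr M (count_space UNIV) (Zs i) = distr M (count_space UNIV) (Zs 0)"
    and distW: "\<And>i. distr M (count_space UNIV) (Ws i) = distr M (count_space UNIV) (Zs 0)"
    and posZ: "\<And>i \<omega>. Zs i \<omega> \<ge> 1"
    and posW: "\<And>i \<omega>. Ws i \<omega> \<ge> 1"
begin

sublocale prob_space M by (rule P)

definition X :: "bool \<times> nat \<Rightarrow> 'a \<Rightarrow> nat" where
  "X = (\<lambda>(b, i). if b then Zs i else Ws i)"

definition Fq :: "nat set \<Rightarrow> real" where
  "Fq B = prob {\<omega> \<in> space M. Zs 0 \<omega> \<in> B}"

definition q :: "nat \<Rightarrow> real" where
  "q v = Fq {v}"

definition cyl :: "((bool \<times> nat) \<times> nat) set \<Rightarrow> 'a set" where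
  "cyl A = {\<omega> \<in> space M. \<forall>p\<in>A. X (fst p) \<omega> = snd p}"

definition wt :: "nat list \<Rightarrow> real" where
  "wt js = prod_list (map q js)"

definition u :: "int \<Rightarrow> int \<Rightarrow> real" where
  "u a m = (\<Sum>js\<in>{js. valid a js \<and> endp a js = m}. wt js)"

lemma indepX: "indep_vars (\<lambda>_. count_space UNIV) X UNIV"
  using indep unfolding X_def by simp

lemma X_meas: "X s \<in> measurable M (count_space UNIV)"
  using indepX unfolding indep_vars_def by (cases s) auto

lemma X_True[simp]: "X (True, i) = Zs i" and X_False[simp]: "X (False, i) = Ws i"
  by (auto simp: X_def)

lemma Zs_meas: "Zs i \<in> measurable M (count_space UNIV)"
  using X_meas[of "(True, i)"] by simp

lemma X_prob: "prob {\<omega> \<in> space M. X s \<omega> \<in> B} = Fq B"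
proof -
  obtain b i where s: "s = (b, i)" by (cases s)
  have "distr M (count_space UNIV) (X s) = distr M (count_space UNIV) (Zs 0)"
    using distZ distW s by (cases b) auto
  then have "measure (distr M (count_space UNIV) (X s)) B = measure (distr M (count_space UNIV) (Zs 0)) B"
    by simp
  then have "prob (X s -` B \<inter> space M) = prob (Zs 0 -` B \<inter> space M)"
    using X_meas[of s] Zs_meas[of 0] by (simp add: measure_distr)
  moreover have "{\<omega> \<in> space M. X s \<omega> \<in> B} = X s -` B \<inter> space M" by auto
  moreover have "{\<omega> \<in> space M. Zs 0 \<omega> \<in> B} = Zs 0 -` B \<inter> space M" by auto
  ultimately show ?thesis unfolding Fq_def by simp
qed

lemma cyl_sets_prob:
  assumes "finite J"
  shows "prob {\<omega> \<in> space M. \<forall>s\<in>J. X s \<omega> \<in> B s} = (\<Prod>s\<in>J. Fq (B s))"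
proof (cases "J = {}")
  case True then show ?thesis by (simp add: prob_space)
next
  case False
  have "prob (\<Inter>s\<in>J. X s -` B s \<inter> space M) = (\<Prod>s\<in>J. prob (X s -` B s \<inter> space M))"
    by (rule indep_varsD[OF indepX False assms]) auto
  moreover have "(\<Inter>s\<in>J. X s -` B s \<inter> space M) = {\<omega> \<in> space M. \<forall>s\<in>J. X s \<omega> \<in> B s}"
    using False by auto
  moreover have "\<And>s. X s -` B s \<inter> space M = {\<omega> \<in> space M. X s \<omega> \<in> B s}" by auto
  ultimately show ?thesis using X_prob by simp
qed

lemma cyl_meas: "finite A \<Longrightarrow> cyl A \<in> sets M"
  unfolding cyl_def
proof (rule sets.sets_Collect_finite_All)
  fix p show "{\<omega> \<in> space M. X (fst p) \<omega> = snd p} \<in> sets M"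
    using X_meas[of "fst p"] by (simp add: measurable_count_space_eq2)
qed

lemma cyl_eq_sets:
  assumes "fnl A"
  shows "cyl A = {\<omega> \<in> space M. \<forall>s\<in>fst ` A. X s \<omega> \<in> {v. (s, v) \<in> A}}"
proof -
  have "(\<forall>p\<in>A. X (fst p) \<omega> = snd p) \<longleftrightarrow> (\<forall>s\<in>fst ` A. X s \<omega> \<in> {v. (s, v) \<in> A})" for \<omega>
  proof
    assume h: "\<forall>p\<in>A. X (fst p) \<omega> = snd p"
    show "\<forall>s\<in>fst ` A. X s \<omega> \<in> {v. (s, v) \<in> A}"
    proof
      fix s assume "s \<in> fst ` A"
      then obtain v where "(s, v) \<in> A" by force
      with h show "X s \<omega> \<in> {v. (s, v) \<in> A}" by force
    qed
  next
    assume h: "\<forall>s\<in>fst ` A. X s \<omega> \<in> {v. (s, v) \<in> A}"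
    show "\<forall>p\<in>A. X (fst p) \<omega> = snd p"
    proof
      fix p assume p: "p \<in> A"
      then have "(fst p, X (fst p) \<omega>) \<in> A" using h by force
      with p assms show "X (fst p) \<omega> = snd p" unfolding fnl_def by (metis prod.collapse)
    qed
  qed
  then show ?thesis unfolding cyl_def by blast
qed

lemma prod_fst_reindex:
  assumes "fnl A" "finite A"
  shows "(\<Prod>s\<in>fst ` A. Fq {v. (s, v) \<in> A}) = (\<Prod>p\<in>A. q (snd p))"
proof -
  have inj: "inj_on fst A" using assms(1) unfolding fnl_def inj_on_def by (metis prod.collapse)
  have "(\<Prod>s\<in>fst ` A. Fq {v. (s, v) \<in> A}) = (\<Prod>p\<in>A. Fq {v. (fst p, v) \<in> A})"
    by (rule prod.reindex[OF inj, unfolded comp_def])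
  also have "\<dots> = (\<Prod>p\<in>A. q (snd p))"
  proof (rule prod.cong[OF refl])
    fix p assume "p \<in> A"
    then have "{v. (fst p, v) \<in> A} = {snd p}" using assms(1) unfolding fnl_def by force
    then show "Fq {v. (fst p, v) \<in> A} = q (snd p)" by (simp add: q_def)
  qed
  finally show ?thesis .
qed

lemma cyl_prob:
  assumes "finite A" "fnl A"
  shows "prob (cyl A) = (\<Prod>p\<in>A. q (snd p))"
  unfolding cyl_eq_sets[OF assms(2)] cyl_sets_prob[OF finite_imageI[OF assms(1)]]
  by (rule prod_fst_reindex[OF assms(2,1)])

lemma cyl_prob_extra:
  assumes "finite A" "fnl A" "s0 \<notin> fst ` A"
  shows "prob (cyl A \<inter> {\<omega> \<in> space M. X s0 \<omega> \<in> B}) = (\<Prod>p\<in>A. q (snd p)) * Fq B"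
proof -
  define BB where "BB = (\<lambda>s. if s = s0 then B else {v. (s, v) \<in> A})"
  have "cyl A \<inter> {\<omega> \<in> space M. X s0 \<omega> \<in> B} = {\<omega> \<in> space M. \<forall>s\<in>insert s0 (fst ` A). X s \<omega> \<in> BB s}"
    unfolding cyl_eq_sets[OF assms(2)] BB_def using assms(3) by force
  then have "prob (cyl A \<inter> {\<omega> \<in> space M. X s0 \<omega> \<in> B}) = (\<Prod>s\<in>insert s0 (fst ` A). Fq (BB s))"
    using cyl_sets_prob[of "insert s0 (fst ` A)" BB] assms(1) by simp
  also have "\<dots> = Fq B * (\<Prod>s\<in>fst ` A. Fq (BB s))"
    using assms by (simp add: BB_def)
  also have "(\<Prod>s\<in>fst ` A. Fq (BB s)) = (\<Prod>s\<in>fst ` A. Fq {v. (s, v) \<in> A})"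
    using assms(3) by (intro prod.cong) (auto simp: BB_def)
  finally show ?thesis using prod_fst_reindex[OF assms(2,1)] by simp
qed

lemma q_nonneg: "0 \<le> q v" by (simp add: q_def Fq_def)
lemma wt_nonneg: "0 \<le> wt js" unfolding wt_def by (induction js) (auto simp: q_nonneg)
lemma u_nonneg: "0 \<le> u a m" unfolding u_def by (intro sum_nonneg wt_nonneg)

lemma prod_gr: "valid a js \<Longrightarrow> (\<Prod>p\<in>gr b a js. q (snd p)) = wt js"
proof (induction js arbitrary: a)
  case Nil then show ?case by (simp add: wt_def)
next
  case (Cons j js)
  have "((b, nat a), j) \<notin> gr b (a - int j) js" using gr_notin[OF Cons.prems] by blast
  then show ?case using Cons finite_gr by (simp add: wt_def)
qed

lemma cyl_gr_iff: "(\<forall>p\<in>gr b a js. X (fst p) \<omega> = snd p) \<longleftrightarrow> pathfol (\<lambda>i. X (b, i) \<omega>) a js"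
  by (induction js arbitrary: a) auto

lemma cyl_gr: "cyl (gr b a js) = {\<omega> \<in> space M. pathfol (\<lambda>i. X (b, i) \<omega>) a js}"
  unfolding cyl_def using cyl_gr_iff by blast

lemma prob_cyl_gr: "valid a js \<Longrightarrow> prob (cyl (gr b a js)) = wt js"
  using cyl_prob[OF finite_gr fnl_gr] prod_gr by simp

lemma sum_wt_le1:
  assumes fin: "finite S" and v: "\<And>js. js \<in> S \<Longrightarrow> valid a js"
    and d: "\<And>js1 js2 z. js1 \<in> S \<Longrightarrow> js2 \<in> S \<Longrightarrow> pathfol z a js1 \<Longrightarrow> pathfol z a js2 \<Longrightarrow> js1 = js2"
  shows "(\<Sum>js\<in>S. wt js) \<le> 1"
proof -
  have "(\<Sum>js\<in>S. wt js) = (\<Sum>js\<in>S. prob (cyl (gr True a js)))"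
    using prob_cyl_gr v by simp
  also have "\<dots> = prob (\<Union>js\<in>S. cyl (gr True a js))"
  proof (rule measure_finite_Union[symmetric, OF fin])
    show "(\<lambda>js. cyl (gr True a js)) ` S \<subseteq> sets M" using cyl_meas finite_gr by blast
    show "disjoint_family_on (\<lambda>js. cyl (gr True a js)) S"
      unfolding disjoint_family_on_def cyl_gr using d by blast
  qed (simp add: emeasure_eq_measure)
  also have "\<dots> \<le> 1" by simp
  finally show ?thesis .
qed

lemma sum_q_le:
  assumes "finite S" "S \<subseteq> {t..}"
  shows "(\<Sum>v\<in>S. q v) \<le> Fq {t..}"
proof -
  have meas: "\<And>B. {\<omega> \<in> space M. Zs 0 \<omega> \<in> B} \<in> sets M"
    using Zs_meas[of 0] by (simp add: measurable_count_space_eq2)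
  have "(\<Sum>v\<in>S. q v) = (\<Sum>v\<in>S. prob {\<omega> \<in> space M. Zs 0 \<omega> \<in> {v}})" by (simp add: q_def Fq_def)
  also have "\<dots> = prob (\<Union>v\<in>S. {\<omega> \<in> space M. Zs 0 \<omega> \<in> {v}})"
  proof (rule measure_finite_Union[symmetric, OF assms(1)])
    show "(\<lambda>v. {\<omega> \<in> space M. Zs 0 \<omega> \<in> {v}}) ` S \<subseteq> sets M" using meas by blast
    show "disjoint_family_on (\<lambda>v. {\<omega> \<in> space M. Zs 0 \<omega> \<in> {v}}) S"
      unfolding disjoint_family_on_def by auto
  qed (simp add: emeasure_eq_measure)
  also have "\<dots> \<le> prob {\<omega> \<in> space M. Zs 0 \<omega> \<in> {t..}}"
    using assms(2) by (intro finite_measure_mono meas) auto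
  finally show ?thesis by (simp add: Fq_def)
qed

lemma Fq_nonneg: "0 \<le> Fq B" by (simp add: Fq_def)
lemma Fq_le1: "Fq B \<le> 1" by (simp add: Fq_def)

lemma Fq_tail: "(\<lambda>t. Fq {t..}) \<longlonglongrightarrow> 0"
proof -
  define A where "A = (\<lambda>t. {\<omega> \<in> space M. Zs 0 \<omega> \<in> {t..}})"
  have meas: "range A \<subseteq> sets M"
    using Zs_meas[of 0] unfolding A_def by (auto simp: measurable_count_space_eq2)
  have dec: "decseq A" unfolding A_def decseq_def by auto
  have "(\<Inter>t. A t) = {}" unfolding A_def
    by auto (metis Suc_n_not_le_n)
  then show ?thesis using finite_Lim_measure_decseq[OF meas dec] unfolding A_def Fq_def by simp
qed

end


context thm6
begin

definition r :: "nat \<Rightarrow> real" where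
  "r k = prob {\<omega> \<in> space M. 0 \<in> TZset (\<lambda>i. Zs i \<omega>) (int k)}"

lemma posZ': "\<forall>i. 1 \<le> Zs i \<omega>" using posZ by auto
lemma posW': "\<forall>i. 1 \<le> Ws i \<omega>" using posW by auto

lemma u_eq_r: "u (int k) 0 = r k"
proof -
  define S where "S = {js. valid (int k) js \<and> endp (int k) js = 0}"
  have fin: "finite S" unfolding S_def by (rule finite_Pth)
  have eq: "{\<omega> \<in> space M. 0 \<in> TZset (\<lambda>i. Zs i \<omega>) (int k)} = (\<Union>js\<in>S. cyl (gr True (int k) js))"
  proof (intro equalityI subsetI)
    fix \<omega> assume "\<omega> \<in> {\<omega> \<in> space M. 0 \<in> TZset (\<lambda>i. Zs i \<omega>) (int k)}"
    then have om: "\<omega> \<in> space M" "inTZ (\<lambda>i. Zs i \<omega>) (int k) 0" by (auto simp: TZset_def)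
    then obtain k' where "ch (\<lambda>i. Zs i \<omega>) (int k) k' = 0" using inTZ_ch by blast
    then have "cpath (\<lambda>i. Zs i \<omega>) (int k) k' \<in> S"
      unfolding S_def using cpath_valid[OF posZ'] cpath_endp by auto
    moreover have "\<omega> \<in> cyl (gr True (int k) (cpath (\<lambda>i. Zs i \<omega>) (int k) k'))"
      unfolding cyl_gr using om cpath_fol by simp
    ultimately show "\<omega> \<in> (\<Union>js\<in>S. cyl (gr True (int k) js))" by blast
  next
    fix \<omega> assume "\<omega> \<in> (\<Union>js\<in>S. cyl (gr True (int k) js))"
    then obtain js where js: "js \<in> S" "\<omega> \<in> space M" "pathfol (\<lambda>i. Zs i \<omega>) (int k) js"
      unfolding cyl_gr by auto
    then have "inTZ (\<lambda>i. Zs i \<omega>) (int k) (endp (int k) js)" using fol_inTZ S_def by blast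
    then show "\<omega> \<in> {\<omega> \<in> space M. 0 \<in> TZset (\<lambda>i. Zs i \<omega>) (int k)}"
      using js S_def by (simp add: TZset_def)
  qed
  have "r k = prob (\<Union>js\<in>S. cyl (gr True (int k) js))" unfolding r_def eq ..
  also have "\<dots> = (\<Sum>js\<in>S. prob (cyl (gr True (int k) js)))"
  proof (rule measure_finite_Union[OF fin])
    show "(\<lambda>js. cyl (gr True (int k) js)) ` S \<subseteq> sets M" using cyl_meas finite_gr by blast
    show "disjoint_family_on (\<lambda>js. cyl (gr True (int k) js)) S"
      unfolding disjoint_family_on_def cyl_gr S_def using fol_eq_land by fastforce
  qed (simp add: emeasure_eq_measure)
  also have "\<dots> = (\<Sum>js\<in>S. wt js)" using prob_cyl_gr S_def by simp
  finally show ?thesis unfolding u_def S_def by simp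
qed

lemma r_nonneg: "0 \<le> r k" by (simp add: r_def)
lemma r_le1: "r k \<le> 1" by (simp add: r_def)

lemma u_shift: "0 \<le> m \<Longrightarrow> u a m = u (a - m) 0"
  unfolding u_def using Pth_shift[of m a] by simp

lemma u_above: "a < m \<Longrightarrow> u a m = 0"
proof -
  assume "a < m"
  then have "{js. valid a js \<and> endp a js = m} = {}" using valid_endp_le by fastforce
  then show ?thesis unfolding u_def by (simp only: sum.empty)
qed

lemma u_pos_r: "0 \<le> m \<Longrightarrow> m \<le> a \<Longrightarrow> u a m = r (nat (a - m))"
  using u_shift[of m a] u_eq_r[of "nat (a - m)"] by simp

lemma u_land_sum:
  assumes "finite S" "\<And>m. m \<in> S \<Longrightarrow> m \<le> 0"
  shows "(\<Sum>m\<in>S. u a m) \<le> 1"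
proof -
  define PP where "PP = (\<lambda>m. {js. valid a js \<and> endp a js = m})"
  have "(\<Sum>m\<in>S. u a m) = (\<Sum>js\<in>(\<Union>m\<in>S. PP m). wt js)"
    unfolding u_def PP_def
    by (rule sum.UNION_disjoint[symmetric]) (auto simp: assms(1) finite_Pth)
  also have "\<dots> \<le> 1"
  proof (rule sum_wt_le1)
    show "finite (\<Union>m\<in>S. PP m)" using assms(1) finite_Pth PP_def by auto
    show "\<And>js. js \<in> (\<Union>m\<in>S. PP m) \<Longrightarrow> valid a js" using PP_def by auto
    show "\<And>js1 js2 z. js1 \<in> (\<Union>m\<in>S. PP m) \<Longrightarrow> js2 \<in> (\<Union>m\<in>S. PP m) \<Longrightarrow>
        pathfol z a js1 \<Longrightarrow> pathfol z a js2 \<Longrightarrow> js1 = js2"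
      using PP_def assms(2) fol_eq_land by fastforce
  qed
  finally show ?thesis .
qed

lemma wt_snoc: "wt (xs @ [j]) = wt xs * q j"
  by (simp add: wt_def)

lemma u_last:
  assumes "1 \<le> b" "m \<le> 0"
  shows "u b m \<le> (\<Sum>k\<in>{1..b}. u b k * q (nat (k - m)))"
proof -
  define f where "f = (\<lambda>(k::int, js'). js' @ [nat (k - m)])"
  define Sig where "Sig = (SIGMA k:{1..b}. {js. valid b js \<and> endp b js = k})"
  have finSig: "finite Sig" unfolding Sig_def using finite_Pth by auto
  have sub: "{js. valid b js \<and> endp b js = m} \<subseteq> f ` Sig"
  proof
    fix js assume "js \<in> {js. valid b js \<and> endp b js = m}"
    then obtain k js' where "js = js' @ [nat (k - m)]" "1 \<le> k" "k \<le> b" "valid b js'" "endp b js' = k"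
      using valid_snoc_decomp[OF assms] by blast
    then show "js \<in> f ` Sig" unfolding f_def Sig_def by (auto intro!: image_eqI[of _ _ "(k, js')"])
  qed
  have "u b m \<le> (\<Sum>js\<in>f ` Sig. wt js)"
    unfolding u_def by (rule sum_mono2[OF finite_imageI[OF finSig] sub]) (simp add: wt_nonneg)
  also have "\<dots> \<le> (\<Sum>x\<in>Sig. wt (f x))"
    using sum_image_le[OF finSig, of "wt" f] wt_nonneg by (simp add: comp_def)
  also have "\<dots> = (\<Sum>k\<in>{1..b}. \<Sum>js\<in>{js. valid b js \<and> endp b js = k}. wt js * q (nat (k - m)))"
    unfolding Sig_def f_def using finite_Pth by (subst sum.Sigma) (auto simp: wt_snoc split_beta intro!: sum.cong)
  also have "\<dots> = (\<Sum>k\<in>{1..b}. u b k * q (nat (k - m)))"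
    unfolding u_def by (simp add: sum_distrib_right)
  finally show ?thesis .
qed

end


context thm6
begin

lemma sum_q_shift:
  assumes "finite S" "\<And>k. k \<in> S \<Longrightarrow> m < k \<and> int t \<le> k - m"
  shows "(\<Sum>k\<in>S. q (nat (k - m))) \<le> Fq {t..}"
proof -
  have inj: "inj_on (\<lambda>k. nat (k - m)) S"
  proof (rule inj_onI)
    fix k k' assume k: "k \<in> S" "k' \<in> S" "nat (k - m) = nat (k' - m)"
    have "int (nat (k - m)) = k - m" "int (nat (k' - m)) = k' - m" using assms(2)[OF k(1)] assms(2)[OF k(2)] by auto
    then show "k = k'" using k(3) by linarith
  qed
  have "(\<Sum>k\<in>S. q (nat (k - m))) = (\<Sum>v\<in>(\<lambda>k. nat (k - m)) ` S. q v)"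
    by (rule sum.reindex[OF inj, symmetric, unfolded comp_def])
  also have "\<dots> \<le> Fq {t..}"
    using assms by (intro sum_q_le) (auto dest!: assms(2) simp: le_nat_iff)
  finally show ?thesis .
qed

lemma u_neg_small:
  assumes e: "0 < e" and rN2: "\<And>k. N2 \<le> k \<Longrightarrow> r k \<le> e"
    and FT0: "Fq {T0..} \<le> e" and b: "int T0 + int N2 + 1 \<le> b" and m: "m \<le> 0"
  shows "u b m \<le> 2 * e"
proof -
  have b1: "1 \<le> b" using b by simp
  define f where "f = (\<lambda>k. u b k * q (nat (k - m)))"
  have "u b m \<le> (\<Sum>k\<in>{1..b}. f k)" unfolding f_def by (rule u_last[OF b1 m])
  also have "\<dots> = (\<Sum>k\<in>{1..b}. if k \<le> b - int N2 then f k else 0) + (\<Sum>k\<in>{1..b}. if k \<le> b - int N2 then 0 else f k)"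
    by (subst sum.distrib[symmetric]) (auto intro: sum.cong)
  also have "(\<Sum>k\<in>{1..b}. if k \<le> b - int N2 then f k else 0) \<le> (\<Sum>k\<in>{1..b}. e * q (nat (k - m)))"
  proof (rule sum_mono)
    fix k assume k: "k \<in> {1..b}"
    show "(if k \<le> b - int N2 then f k else 0) \<le> e * q (nat (k - m))"
    proof (cases "k \<le> b - int N2")
      case True
      then have "u b k = r (nat (b - k))" using k u_pos_r[of k b] by simp
      moreover have "r (nat (b - k)) \<le> e" using True by (intro rN2) linarith
      ultimately show ?thesis using True q_nonneg[of "nat (k - m)"] unfolding f_def
        by (simp add: mult_right_mono)
    next
      case False then show ?thesis using e q_nonneg[of "nat (k - m)"] by simp
    qed
  qed
  also have "(\<Sum>k\<in>{1..b}. e * q (nat (k - m))) = e * (\<Sum>k\<in>{1..b}. q (nat (k - m)))"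
    by (simp add: sum_distrib_left)
  also have "(\<Sum>k\<in>{1..b}. q (nat (k - m))) \<le> Fq {0..}"
    using m by (intro sum_q_shift) auto
  also have "Fq {0..} \<le> 1" by (rule Fq_le1)
  also have "(\<Sum>k\<in>{1..b}. if k \<le> b - int N2 then 0 else f k) \<le> (\<Sum>k\<in>{k\<in>{1..b}. b - int N2 < k}. q (nat (k - m)))"
  proof -
    have "(\<Sum>k\<in>{1..b}. if k \<le> b - int N2 then 0 else f k) = (\<Sum>k\<in>{k\<in>{1..b}. b - int N2 < k}. f k)"
        by (subst sum.inter_filter) (auto intro!: sum.cong)
    also have "\<dots> \<le> (\<Sum>k\<in>{k\<in>{1..b}. b - int N2 < k}. q (nat (k - m)))"
    proof (rule sum_mono)
      fix k assume k: "k \<in> {k\<in>{1..b}. b - int N2 < k}"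
      have "u b k = r (nat (b - k))" using k u_pos_r[of k b] by simp
      then have "u b k \<le> 1" using r_le1 by simp
      then show "f k \<le> q (nat (k - m))" unfolding f_def
        using q_nonneg[of "nat (k - m)"] u_nonneg[of b k] by (simp add: mult_left_le_one_le)
    qed
    finally show ?thesis .
  qed
  also have "(\<Sum>k\<in>{k\<in>{1..b}. b - int N2 < k}. q (nat (k - m))) \<le> Fq {T0..}"
  proof (rule sum_q_shift)
    show "finite {k\<in>{1..b}. b - int N2 < k}" by (rule finite_subset[of _ "{1..b}"]) auto
  qed (use m b in auto)
  finally show ?thesis using FT0 e by simp
qed

lemma pos_part:
  assumes e: "0 < e" and N1: "1 \<le> N1"
    and tail: "\<And>F. finite F \<Longrightarrow> F \<subseteq> {N1..} \<Longrightarrow> (\<Sum>k\<in>F. r k ^ 2) \<le> e"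
    and small: "\<And>k. D \<le> k \<Longrightarrow> r k \<le> e / real N1"
    and d: "D \<le> d" and I: "finite I"
  shows "(\<Sum>i\<in>I. r (i + d) * r i) \<le> 3 * e"
proof -
  have "(\<Sum>i\<in>I. r (i + d) * r i) = (\<Sum>i\<in>I \<inter> {..<N1}. r (i + d) * r i) + (\<Sum>i\<in>I - {..<N1}. r (i + d) * r i)"
    by (rule sum.Int_Diff[OF I])
  also have "(\<Sum>i\<in>I \<inter> {..<N1}. r (i + d) * r i) \<le> (\<Sum>i\<in>{..<N1}. e / real N1)"
  proof -
    have "(\<Sum>i\<in>I \<inter> {..<N1}. r (i + d) * r i) \<le> (\<Sum>i\<in>I \<inter> {..<N1}. e / real N1)"
    proof (rule sum_mono)
      fix i assume "i \<in> I \<inter> {..<N1}"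
      have "r (i + d) \<le> e / real N1" using d by (intro small) simp
      moreover have "r (i + d) * r i \<le> r (i + d) * 1"
        by (rule mult_left_mono[OF r_le1 r_nonneg])
      ultimately show "r (i + d) * r i \<le> e / real N1" by simp
    qed
    also have "\<dots> \<le> (\<Sum>i\<in>{..<N1}. e / real N1)"
      using e by (intro sum_mono2) auto
    finally show ?thesis .
  qed
  also have "(\<Sum>i\<in>{..<N1}. e / real N1) = e" using N1 by simp
  also have "(\<Sum>i\<in>I - {..<N1}. r (i + d) * r i) \<le> (\<Sum>i\<in>I - {..<N1}. r (i + d) ^ 2 + r i ^ 2)"
  proof (rule sum_mono)
    fix i
    have "0 \<le> (r (i + d) - r i) ^ 2 + r (i + d) * r i" using r_nonneg[of i] r_nonneg[of "i+d"] by simp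
    then show "r (i + d) * r i \<le> r (i + d) ^ 2 + r i ^ 2" by (simp add: power2_eq_square algebra_simps)
  qed
  also have "\<dots> = (\<Sum>i\<in>I - {..<N1}. r (i + d) ^ 2) + (\<Sum>i\<in>I - {..<N1}. r i ^ 2)"
    by (rule sum.distrib)
  also have "(\<Sum>i\<in>I - {..<N1}. r i ^ 2) \<le> e" using I by (intro tail) auto
  also have "(\<Sum>i\<in>I - {..<N1}. r (i + d) ^ 2) \<le> e"
  proof -
    have "(\<Sum>i\<in>I - {..<N1}. r (i + d) ^ 2) = (\<Sum>k\<in>(\<lambda>i. i + d) ` (I - {..<N1}). r k ^ 2)"
      by (subst sum.reindex) (auto simp: inj_on_def)
    also have "\<dots> \<le> e" using I by (intro tail) auto
    finally show ?thesis .
  qed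
  finally show ?thesis by simp
qed

lemma r_tendsto:
  assumes sq: "summable (\<lambda>k. r k ^ 2)"
  shows "r \<longlonglongrightarrow> 0"
proof -
  have "(\<lambda>k. r k ^ 2) \<longlonglongrightarrow> 0" by (rule summable_LIMSEQ_zero[OF sq])
  then have "(\<lambda>k. sqrt (r k ^ 2)) \<longlonglongrightarrow> sqrt 0" by (rule tendsto_real_sqrt)
  then show ?thesis using r_nonneg by simp
qed

lemma pair_bound:
  assumes sq: "summable (\<lambda>k. r k ^ 2)" and eps: "0 < \<epsilon>"
  shows "\<exists>A D. 1 \<le> A \<and> 1 \<le> D \<and> (\<forall>a b N. A \<le> b \<longrightarrow> b + int D \<le> a \<longrightarrow>
            (\<Sum>i<N. u a (b - int i) * u b (b - int i)) \<le> \<epsilon>)"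
proof -
  define e where "e = \<epsilon> / 5"
  have e: "0 < e" using eps e_def by simp
  have rlim: "r \<longlonglongrightarrow> 0" by (rule r_tendsto[OF sq])
  obtain N0 where N0: "\<And>n. N0 \<le> n \<Longrightarrow> norm (\<Sum>i. r (i + n) ^ 2) < e"
    using suminf_exist_split[OF e sq] by blast
  define N1 where "N1 = max 1 N0"
  have N1: "1 \<le> N1" by (simp add: N1_def)
  have tail: "(\<Sum>k\<in>F. r k ^ 2) \<le> e" if F: "finite F" "F \<subseteq> {N1..}" for F
  proof -
    have "(\<lambda>i. i + N1) ` ((\<lambda>k. k - N1) ` F) = (\<lambda>k. k) ` F"
      unfolding image_image using F(2) by (intro image_cong) auto
    then have FF: "F = (\<lambda>i. i + N1) ` ((\<lambda>k. k - N1) ` F)" by simp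
    have "(\<Sum>k\<in>F. r k ^ 2) = (\<Sum>i\<in>(\<lambda>k. k - N1) ` F. r (i + N1) ^ 2)"
      by (rule sum.reindex_cong[OF _ FF]) (auto simp: inj_on_def)
    also have "\<dots> \<le> (\<Sum>i. r (i + N1) ^ 2)"
      using F summable_iff_shift[of "\<lambda>k. r k ^ 2" N1] sq by (intro sum_le_suminf) auto
    also have "\<dots> \<le> norm (\<Sum>i. r (i + N1) ^ 2)" by simp
    also have "\<dots> < e" using N0 N1_def by simp
    finally show ?thesis by simp
  qed
  have "\<forall>\<^sub>F k in sequentially. norm (r k - 0) < e / real N1"
    using rlim e N1 unfolding tendsto_iff by (simp add: dist_real_def)
  then obtain D0 where D0': "\<forall>k\<ge>D0. norm (r k - 0) < e / real N1"
    unfolding eventually_sequentially by blast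
  have D0: "r k \<le> e / real N1" if "D0 \<le> k" for k using D0' that by fastforce
  define D where "D = max 1 D0"
  have "\<forall>\<^sub>F k in sequentially. norm (r k - 0) < e"
    using rlim e unfolding tendsto_iff by (simp add: dist_real_def)
  then obtain N2 where N2': "\<forall>k\<ge>N2. norm (r k - 0) < e"
    unfolding eventually_sequentially by blast
  have N2: "r k \<le> e" if "N2 \<le> k" for k using N2' that by fastforce
  have "\<forall>\<^sub>F t in sequentially. norm (Fq {t..} - 0) < e"
    using Fq_tail e unfolding tendsto_iff by (simp add: dist_real_def)
  then obtain T0 where T0': "\<forall>t\<ge>T0. norm (Fq {t..} - 0) < e"
    unfolding eventually_sequentially by blast
  have T0: "Fq {T0..} \<le> e" using T0' by fastforce
  define A where "A = int T0 + int N2 + 1"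
  show ?thesis
  proof (intro exI[of _ A] exI[of _ D] conjI allI impI)
    show "1 \<le> A" "1 \<le> D" by (auto simp: A_def D_def)
    fix a b :: int and N :: nat
    assume bA: "A \<le> b" and ab: "b + int D \<le> a"
    define d where "d = nat (a - b)"
    have dD: "D0 \<le> d" using ab D_def d_def by auto
    define I1 where "I1 = {..<N} \<inter> {i. int i < b}"
    define I2 where "I2 = {..<N} - {i. int i < b}"
    have "(\<Sum>i<N. u a (b - int i) * u b (b - int i)) =
        (\<Sum>i\<in>I1. u a (b - int i) * u b (b - int i)) + (\<Sum>i\<in>I2. u a (b - int i) * u b (b - int i))"
      unfolding I1_def I2_def by (rule sum.Int_Diff) simp
    also have "(\<Sum>i\<in>I1. u a (b - int i) * u b (b - int i)) = (\<Sum>i\<in>I1. r (i + d) * r i)"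
    proof (rule sum.cong[OF refl])
      fix i assume "i \<in> I1"
      then have i: "int i < b" by (simp add: I1_def)
      have "u a (b - int i) = r (nat (a - (b - int i)))" using i ab by (intro u_pos_r) auto
      moreover have "nat (a - (b - int i)) = i + d" using ab d_def by auto
      moreover have "u b (b - int i) = r i" using i u_pos_r[of "b - int i" b] by simp
      ultimately show "u a (b - int i) * u b (b - int i) = r (i + d) * r i" by simp
    qed
    also have "(\<Sum>i\<in>I1. r (i + d) * r i) \<le> 3 * e"
      by (rule pos_part[OF e N1 tail D0 dD]) (auto simp: I1_def)
    also have "(\<Sum>i\<in>I2. u a (b - int i) * u b (b - int i)) \<le> (\<Sum>i\<in>I2. u a (b - int i) * (2 * e))"
    proof (rule sum_mono)
      fix i assume "i \<in> I2"
      then have "b - int i \<le> 0" by (simp add: I2_def)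
      then have "u b (b - int i) \<le> 2 * e"
        using bA A_def by (intro u_neg_small[OF e N2 T0]) auto
      then show "u a (b - int i) * u b (b - int i) \<le> u a (b - int i) * (2 * e)"
        using u_nonneg[of a "b - int i"] by (simp add: mult_left_mono)
    qed
    also have "\<dots> = 2 * e * (\<Sum>i\<in>I2. u a (b - int i))" by (simp add: sum_distrib_left mult.commute)
    also have "(\<Sum>i\<in>I2. u a (b - int i)) = (\<Sum>m\<in>(\<lambda>i. b - int i) ` I2. u a m)"
      by (subst sum.reindex) (auto simp: inj_on_def)
    also have "\<dots> \<le> 1" by (rule u_land_sum) (auto simp: I2_def)
    finally show "(\<Sum>i<N. u a (b - int i) * u b (b - int i)) \<le> \<epsilon>"
      using e e_def by simp
  qed
qed

end


context thm6
begin

lemma cyl_Un: "cyl (A \<union> B) = cyl A \<inter> cyl B"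
  unfolding cyl_def by auto

lemma em_cyl: "finite A \<Longrightarrow> fnl A \<Longrightarrow> emeasure M (cyl A) = ennreal (\<Prod>p\<in>A. q (snd p))"
  using cyl_prob cyl_meas by (simp add: emeasure_eq_measure)

lemma fst_disj_disj: "fst ` A \<inter> fst ` B = {} \<Longrightarrow> A \<inter> B = {}"
  by auto

lemma gr_TF_disj: "fst ` gr True a js \<inter> fst ` gr False b js' = {}"
proof -
  have False if "p \<in> gr True a js" "p' \<in> gr False b js'" "fst p = fst p'" for p p'
    using gr_fst_b[OF that(1)] gr_fst_b[OF that(2)] that(3) by simp
  then show ?thesis by blast
qed

lemma gr_FF_disj:
  assumes "valid a js1" "valid b js2" "nodes a js1 \<inter> nodes b js2 = {}"
  shows "fst ` gr False a js1 \<inter> fst ` gr False b js2 = {}"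
proof -
  have "x = y" if "x \<in> nodes a js1" "y \<in> nodes b js2" "nat x = nat y" for x y
  proof -
    have "1 \<le> x" "1 \<le> y" using valid_nodes[OF assms(1) that(1)] valid_nodes[OF assms(2) that(2)] by auto
    then have "x = int (nat x)" "y = int (nat y)" by simp_all
    then show "x = y" using that(3) by metis
  qed
  then show ?thesis unfolding gr_fst_img using assms(3) by auto
qed

lemma em_cyl3:
  assumes v: "valid n zs" "valid a js1" "valid b js2" and d: "nodes a js1 \<inter> nodes b js2 = {}"
  shows "emeasure M (cyl (gr True n zs \<union> gr False a js1 \<union> gr False b js2)) = ennreal (wt zs * wt js1 * wt js2)"
proof -
  define A1 where "A1 = gr True n zs"
  define A2 where "A2 = gr False a js1"
  define A3 where "A3 = gr False b js2"
  have f: "finite A1" "finite A2" "finite A3" unfolding A1_def A2_def A3_def by (auto simp: finite_gr)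
  have d23: "fst ` A2 \<inter> fst ` A3 = {}" unfolding A2_def A3_def by (rule gr_FF_disj[OF v(2,3) d])
  have d1: "fst ` A1 \<inter> fst ` (A2 \<union> A3) = {}" unfolding A1_def A2_def A3_def
    using gr_TF_disj by blast
  have fn: "fnl (A1 \<union> (A2 \<union> A3))"
    using fnl_Un[OF fnl_gr[OF v(1)] fnl_Un[OF fnl_gr[OF v(2)] fnl_gr[OF v(3)]]] d23 d1
    unfolding A1_def A2_def A3_def by simp
  have "(\<Prod>p\<in>A1 \<union> (A2 \<union> A3). q (snd p)) = (\<Prod>p\<in>A1. q (snd p)) * ((\<Prod>p\<in>A2. q (snd p)) * (\<Prod>p\<in>A3. q (snd p)))"
    using f fst_disj_disj[OF d1] fst_disj_disj[OF d23] by (simp add: prod.union_disjoint)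
  also have "\<dots> = wt zs * wt js1 * wt js2" unfolding A1_def A2_def A3_def using prod_gr v by simp
  finally show ?thesis
    using em_cyl[of "A1 \<union> (A2 \<union> A3)"] f fn unfolding A1_def A2_def A3_def by (simp add: Un_assoc)
qed

definition Zq :: "int \<Rightarrow> nat \<Rightarrow> nat list set" where
  "Zq n k = {zs. length zs = k \<and> valid n zs \<and> 1 \<le> endp n zs}"

definition Bad0 :: "int \<Rightarrow> nat \<Rightarrow> nat \<Rightarrow> 'a set" where
  "Bad0 n L t = (\<Union>k<L. \<Union>zs\<in>Zq n k. cyl (gr True n zs) \<inter> {\<omega> \<in> space M. X (True, nat (endp n zs)) \<omega> \<in> {t..}})"

lemma finite_Zq: "finite (Zq n k)"
  unfolding Zq_def by (rule finite_subset[OF _ finite_valid[of n 1]]) auto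

lemma Xset_meas: "{\<omega> \<in> space M. X s \<omega> \<in> B} \<in> sets M"
  using X_meas[of s] by (simp add: measurable_count_space_eq2)

lemma Zset_meas: "{\<omega> \<in> space M. t \<le> Zs i \<omega>} \<in> sets M"
  using Xset_meas[of "(True, i)" "{t..}"] by simp

lemma Bad0_meas: "Bad0 n L t \<in> sets M"
  unfolding Bad0_def using finite_Zq cyl_meas finite_gr Zset_meas by (intro sets.finite_UN) auto

lemma Bad0_bound: "emeasure M (Bad0 n L t) \<le> ennreal (real L * Fq {t..})"
proof -
  define E where "E = (\<lambda>zs. cyl (gr True n zs) \<inter> {\<omega> \<in> space M. X (True, nat (endp n zs)) \<omega> \<in> {t..}})"
  have Emeas: "E zs \<in> sets M" for zs unfolding E_def using cyl_meas finite_gr Zset_meas by auto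
  have Eem: "emeasure M (E zs) = ennreal (wt zs * Fq {t..})" if "zs \<in> Zq n k" for zs k
  proof -
    have v: "valid n zs" and e1: "1 \<le> endp n zs" using that by (auto simp: Zq_def)
    have nin: "(True, nat (endp n zs)) \<notin> fst ` gr True n zs"
    proof
      assume "(True, nat (endp n zs)) \<in> fst ` gr True n zs"
      then obtain x where "x \<in> nodes n zs" "nat (endp n zs) = nat x" unfolding gr_fst_img by auto
      with valid_nodes[OF v] e1 show False by force
    qed
    have "prob (E zs) = wt zs * Fq {t..}"
      unfolding E_def using cyl_prob_extra[OF finite_gr fnl_gr[OF v] nin, of "{t..}"] prod_gr[OF v] by simp
    then show ?thesis using Emeas by (simp add: emeasure_eq_measure)
  qed
  have "emeasure M (Bad0 n L t) \<le> (\<Sum>k<L. emeasure M (\<Union>zs\<in>Zq n k. E zs))"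
    unfolding Bad0_def E_def[symmetric]
    by (rule emeasure_subadditive_finite) (use Emeas finite_Zq in auto)
  also have "\<dots> \<le> (\<Sum>k<L. ennreal (Fq {t..}))"
  proof (rule sum_mono)
    fix k
    have "emeasure M (\<Union>zs\<in>Zq n k. E zs) \<le> (\<Sum>zs\<in>Zq n k. emeasure M (E zs))"
      by (rule emeasure_subadditive_finite) (use Emeas finite_Zq in auto)
    also have "\<dots> = (\<Sum>zs\<in>Zq n k. ennreal (wt zs * Fq {t..}))"
      using Eem by (intro sum.cong) auto
    also have "\<dots> = ennreal ((\<Sum>zs\<in>Zq n k. wt zs) * Fq {t..})"
      using wt_nonneg Fq_nonneg by (simp add: sum_distrib_right)
    also have "\<dots> \<le> ennreal (Fq {t..})"
    proof (rule ennreal_leI)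
      have "(\<Sum>zs\<in>Zq n k. wt zs) \<le> 1"
      proof (rule sum_wt_le1[OF finite_Zq])
        show "\<And>js. js \<in> Zq n k \<Longrightarrow> valid n js" by (auto simp: Zq_def)
        show "\<And>js1 js2 z. js1 \<in> Zq n k \<Longrightarrow> js2 \<in> Zq n k \<Longrightarrow> pathfol z n js1 \<Longrightarrow> pathfol z n js2 \<Longrightarrow> js1 = js2"
          by (auto simp: Zq_def intro: fol_eq_len)
      qed
      then show "(\<Sum>zs\<in>Zq n k. wt zs) * Fq {t..} \<le> Fq {t..}"
        using Fq_nonneg[of "{t..}"] by (simp add: mult_left_le_one_le sum_nonneg wt_nonneg)
    qed
    finally show "emeasure M (\<Union>zs\<in>Zq n k. E zs) \<le> ennreal (Fq {t..})" .
  qed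
  also have "\<dots> = ennreal (real L * Fq {t..})"
    using Fq_nonneg[of "{t..}"] by (subst sum_ennreal) auto
  finally show ?thesis .
qed

definition Zp :: "int \<Rightarrow> int \<Rightarrow> nat \<Rightarrow> nat list set" where
  "Zp n A l = {zs. length zs = l \<and> valid n zs \<and> A \<le> endp n zs}"

definition PP :: "int \<Rightarrow> int \<Rightarrow> int \<Rightarrow> (nat list \<times> nat list) set" where
  "PP a b m = {(js1, js2). valid a js1 \<and> endp a js1 = m \<and> valid b js2 \<and> endp b js2 = m \<and> nodes a js1 \<inter> nodes b js2 = {}}"

definition BadP :: "int \<Rightarrow> int \<Rightarrow> nat \<Rightarrow> nat \<Rightarrow> 'a set" where
  "BadP n A l1 l2 = (\<Union>zs\<in>Zp n A l2. \<Union>i'. \<Union>p\<in>PP (endp n (take l1 zs)) (endp n zs) (endp n zs - int i').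
     cyl (gr True n zs \<union> gr False (endp n (take l1 zs)) (fst p) \<union> gr False (endp n zs) (snd p)))"

lemma finite_Zp: "finite (Zp n A l)"
  unfolding Zp_def by (rule finite_subset[OF _ finite_valid[of n A]]) auto

lemma finite_PP: "finite (PP a b m)"
  by (rule finite_subset[of _ "{js. valid a js \<and> endp a js = m} \<times> {js. valid b js \<and> endp b js = m}"])
     (auto simp: PP_def finite_Pth)

lemma BadP_meas: "BadP n A l1 l2 \<in> sets M"
  unfolding BadP_def
  using finite_Zp finite_PP cyl_meas finite_gr
  by (intro sets.finite_UN sets.countable_UN sets.countable_UN') (auto intro!: sets.finite_UN)

lemma BadP_bound:
  assumes pb: "\<And>a b N. A \<le> b \<Longrightarrow> b + int D \<le> a \<Longrightarrow> (\<Sum>i<N. u a (b - int i) * u b (b - int i)) \<le> \<delta>"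
    and l: "l1 + D \<le> l2" and \<delta>: "0 \<le> \<delta>"
  shows "emeasure M (BadP n A l1 l2) \<le> ennreal \<delta>"
proof -
  define aa where "aa = (\<lambda>zs. endp n (take l1 zs))"
  define bb where "bb = (\<lambda>zs. endp n zs)"
  define C where "C = (\<lambda>zs p. cyl (gr True n zs \<union> gr False (aa zs) (fst p) \<union> gr False (bb zs) (snd p)))"
  have Cmeas: "C zs p \<in> sets M" for zs p unfolding C_def by (rule cyl_meas) (auto simp: finite_gr)
  have UCmeas: "(\<Union>p\<in>PP (aa zs) (bb zs) (bb zs - int i'). C zs p) \<in> sets M" for zs i'
    using finite_PP Cmeas by (intro sets.finite_UN) auto
  have BP: "BadP n A l1 l2 = (\<Union>zs\<in>Zp n A l2. \<Union>i'. \<Union>p\<in>PP (aa zs) (bb zs) (bb zs - int i'). C zs p)"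
    by (simp add: BadP_def aa_def bb_def C_def)
  have "emeasure M (BadP n A l1 l2) \<le> (\<Sum>zs\<in>Zp n A l2. emeasure M (\<Union>i'. \<Union>p\<in>PP (aa zs) (bb zs) (bb zs - int i'). C zs p))"
    unfolding BP by (rule emeasure_subadditive_finite) (use finite_Zp UCmeas in auto)
  also have "\<dots> \<le> (\<Sum>zs\<in>Zp n A l2. ennreal (wt zs * \<delta>))"
  proof (rule sum_mono)
    fix zs assume zs: "zs \<in> Zp n A l2"
    then have v: "valid n zs" and len: "length zs = l2" and Ab: "A \<le> bb zs" by (auto simp: Zp_def bb_def)
    have gap: "bb zs + int D \<le> aa zs"
      using take_endp_gap[OF v, of l1] len l unfolding aa_def bb_def by simp
    have "emeasure M (\<Union>i'. \<Union>p\<in>PP (aa zs) (bb zs) (bb zs - int i'). C zs p)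
        \<le> (\<Sum>i'. emeasure M (\<Union>p\<in>PP (aa zs) (bb zs) (bb zs - int i'). C zs p))"
      by (rule emeasure_subadditive_countably) (use UCmeas in auto)
    also have "\<dots> \<le> ennreal (wt zs * \<delta>)"
    proof (rule suminf_le_const[OF summableI])
      fix N
      have "(\<Sum>i'<N. emeasure M (\<Union>p\<in>PP (aa zs) (bb zs) (bb zs - int i'). C zs p))
          \<le> (\<Sum>i'<N. ennreal (wt zs * (u (aa zs) (bb zs - int i') * u (bb zs) (bb zs - int i'))))"
      proof (rule sum_mono)
        fix i'
        define m where "m = bb zs - int i'"
        have "emeasure M (\<Union>p\<in>PP (aa zs) (bb zs) m. C zs p) \<le> (\<Sum>p\<in>PP (aa zs) (bb zs) m. emeasure M (C zs p))"
          by (rule emeasure_subadditive_finite) (use finite_PP Cmeas in auto)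
        also have "\<dots> = (\<Sum>p\<in>PP (aa zs) (bb zs) m. ennreal (wt zs * (wt (fst p) * wt (snd p))))"
        proof (rule sum.cong[OF refl])
          fix p assume "p \<in> PP (aa zs) (bb zs) m"
          then have "valid (aa zs) (fst p)" "valid (bb zs) (snd p)" "nodes (aa zs) (fst p) \<inter> nodes (bb zs) (snd p) = {}"
            by (auto simp: PP_def)
          then show "emeasure M (C zs p) = ennreal (wt zs * (wt (fst p) * wt (snd p)))"
            unfolding C_def using em_cyl3[OF v] by (simp add: mult.assoc)
        qed
        also have "\<dots> = ennreal (wt zs * (\<Sum>p\<in>PP (aa zs) (bb zs) m. wt (fst p) * wt (snd p)))"
          by (subst sum_ennreal) (auto simp: wt_nonneg sum_distrib_left)
        also have "\<dots> \<le> ennreal (wt zs * (u (aa zs) m * u (bb zs) m))"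
        proof (rule ennreal_leI, rule mult_left_mono[OF _ wt_nonneg])
          have "(\<Sum>p\<in>PP (aa zs) (bb zs) m. wt (fst p) * wt (snd p))
              \<le> (\<Sum>p\<in>{js. valid (aa zs) js \<and> endp (aa zs) js = m} \<times> {js. valid (bb zs) js \<and> endp (bb zs) js = m}. wt (fst p) * wt (snd p))"
            by (rule sum_mono2) (auto simp: PP_def finite_Pth wt_nonneg)
          also have "\<dots> = u (aa zs) m * u (bb zs) m"
            unfolding u_def by (simp add: sum_product sum.cartesian_product split_beta)
          finally show "(\<Sum>p\<in>PP (aa zs) (bb zs) m. wt (fst p) * wt (snd p)) \<le> u (aa zs) m * u (bb zs) m" .
        qed
        finally show "emeasure M (\<Union>p\<in>PP (aa zs) (bb zs) (bb zs - int i'). C zs p)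
            \<le> ennreal (wt zs * (u (aa zs) (bb zs - int i') * u (bb zs) (bb zs - int i')))"
          unfolding m_def .
      qed
      also have "\<dots> = ennreal (wt zs * (\<Sum>i'<N. u (aa zs) (bb zs - int i') * u (bb zs) (bb zs - int i')))"
        by (subst sum_ennreal) (auto simp: wt_nonneg u_nonneg sum_distrib_left)
      also have "\<dots> \<le> ennreal (wt zs * \<delta>)"
        using pb[OF Ab gap, of N] by (intro ennreal_leI mult_left_mono wt_nonneg)
      finally show "(\<Sum>i'<N. emeasure M (\<Union>p\<in>PP (aa zs) (bb zs) (bb zs - int i'). C zs p)) \<le> ennreal (wt zs * \<delta>)" .
    qed
    finally show "emeasure M (\<Union>i'. \<Union>p\<in>PP (aa zs) (bb zs) (bb zs - int i'). C zs p) \<le> ennreal (wt zs * \<delta>)" .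
  qed
  also have "\<dots> = ennreal ((\<Sum>zs\<in>Zp n A l2. wt zs) * \<delta>)"
    using \<delta> by (subst sum_ennreal) (auto simp: wt_nonneg sum_distrib_right)
  also have "\<dots> \<le> ennreal \<delta>"
  proof (rule ennreal_leI)
    have "(\<Sum>zs\<in>Zp n A l2. wt zs) \<le> 1"
    proof (rule sum_wt_le1[OF finite_Zp])
      show "\<And>js. js \<in> Zp n A l2 \<Longrightarrow> valid n js" by (auto simp: Zp_def)
      show "\<And>js1 js2 z. js1 \<in> Zp n A l2 \<Longrightarrow> js2 \<in> Zp n A l2 \<Longrightarrow> pathfol z n js1 \<Longrightarrow> pathfol z n js2 \<Longrightarrow> js1 = js2"
        by (auto simp: Zp_def intro: fol_eq_len)
    qed
    then show "(\<Sum>zs\<in>Zp n A l2. wt zs) * \<delta> \<le> \<delta>"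
      using \<delta> by (simp add: mult_left_le_one_le sum_nonneg wt_nonneg)
  qed
  finally show ?thesis .
qed

end


context thm6
begin

lemma cover:
  assumes A1: "1 \<le> A" and nA: "A + int (K * D) * int t \<le> n" and om: "\<omega> \<in> space M"
    and Lam: "Lambda (\<lambda>k. Zs k \<omega>) (\<lambda>k. Ws k \<omega>) n \<le> K"
  shows "\<omega> \<in> Bad0 n (K * D) t \<union> (\<Union>p\<in>{p. fst p < snd p \<and> snd p \<le> K}. BadP n A (fst p * D) (snd p * D))"
proof (rule ccontr)
  assume notin: "\<omega> \<notin> Bad0 n (K * D) t \<union> (\<Union>p\<in>{p. fst p < snd p \<and> snd p \<le> K}. BadP n A (fst p * D) (snd p * D))"
  define z where "z = (\<lambda>k. Zs k \<omega>)"
  define w where "w = (\<lambda>k. Ws k \<omega>)"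
  define L where "L = K * D"
  have pz: "\<forall>i. 1 \<le> z i" and pw: "\<forall>i. 1 \<le> w i" using posZ posW by (auto simp: z_def w_def)
  have chL: "A \<le> ch z n L"
  proof (rule ccontr)
    assume nl: "\<not> A \<le> ch z n L"
    have "\<exists>k<L. 1 \<le> ch z n k \<and> t \<le> z (nat (ch z n k))"
    proof (rule ccontr)
      assume H: "\<not> (\<exists>k<L. 1 \<le> ch z n k \<and> t \<le> z (nat (ch z n k)))"
      have "k \<le> L \<Longrightarrow> n - int k * int t \<le> ch z n k" for k
      proof (induction k)
        case 0 then show ?case by simp
      next
        case (Suc k)
        then have IH: "n - int k * int t \<le> ch z n k" and kL: "k < L" by auto
        show ?case
        proof (cases "1 \<le> ch z n k")
          case True
          with H kL have "z (nat (ch z n k)) < t" by auto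
          then show ?thesis using IH True ch_Suc[of z n k] by (simp add: algebra_simps)
        next
          case False
          then show ?thesis using IH ch_Suc[of z n k] by (simp add: algebra_simps)
        qed
      qed
      then have "n - int L * int t \<le> ch z n L" by simp
      with nA nl show False unfolding L_def by simp
    qed
    then obtain k where k: "k < L" "1 \<le> ch z n k" "t \<le> z (nat (ch z n k))" by blast
    define zs where "zs = cpath z n k"
    have "\<forall>k'<k. 1 \<le> ch z n k'" using k(2) ch_mono[of _ k z n] by (meson less_imp_le order_trans)
    then have len: "length zs = k" unfolding zs_def by (rule cpath_length)
    have zsZ: "zs \<in> Zq n k" unfolding Zq_def zs_def using len cpath_valid[OF pz] cpath_endp k(2) zs_def by auto
    have "\<omega> \<in> cyl (gr True n zs)" unfolding cyl_gr zs_def using om cpath_fol z_def by simp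
    moreover have "\<omega> \<in> {\<omega> \<in> space M. X (True, nat (endp n zs)) \<omega> \<in> {t..}}"
      using om k(3) cpath_endp unfolding zs_def z_def by simp
    ultimately have "\<omega> \<in> Bad0 n (K * D) t" unfolding Bad0_def L_def[symmetric] using k(1) zsZ by blast
    with notin show False by blast
  qed
  define s where "s = (\<lambda>i. ch z n (i * D))"
  have sA: "A \<le> s i" if "i \<le> K" for i
  proof -
    have "i * D \<le> L" using that unfolding L_def by simp
    then show ?thesis using chL ch_mono[of "i * D" L z n] unfolding s_def by simp
  qed
  have noshare: "\<not> (\<exists>p p'. ch w (s i) p = ch w (s j) p')" if ij: "i < j" "j \<le> K" for i j
  proof
    assume "\<exists>p p'. ch w (s i) p = ch w (s j) p'"
    then obtain p p' where "ch w (s i) p = ch w (s j) p'" by blast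
    from first_meet[OF this] obtain i0 j0 where ij0: "ch w (s i) i0 = ch w (s j) j0"
      and disj: "nodes (s i) (cpath w (s i) i0) \<inter> nodes (s j) (cpath w (s j) j0) = {}" by blast
    define m where "m = ch w (s j) j0"
    define zs where "zs = cpath z n (j * D)"
    have "\<forall>k'<j * D. 1 \<le> ch z n k'"
    proof (intro allI impI)
      fix k' assume "k' < j * D"
      then have "ch z n (j * D) \<le> ch z n k'" by (intro ch_mono) simp
      then show "1 \<le> ch z n k'" using sA[OF ij(2)] A1 unfolding s_def by simp
    qed
    then have len: "length zs = j * D" unfolding zs_def by (rule cpath_length)
    have ezs: "endp n zs = s j" unfolding zs_def s_def by (rule cpath_endp)
    have zsP: "zs \<in> Zp n A (j * D)"
      unfolding Zp_def using len ezs sA[OF ij(2)] cpath_valid[OF pz] zs_def by auto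
    have etake: "endp n (take (i * D) zs) = s i"
      unfolding zs_def s_def using ij by (subst cpath_take) (auto simp: cpath_endp)
    have mle: "m \<le> s j" unfolding m_def using ch_mono[of 0 j0 w "s j"] by simp
    define i' where "i' = nat (s j - m)"
    have mi: "s j - int i' = m" using mle unfolding i'_def by simp
    define pp where "pp = (cpath w (s i) i0, cpath w (s j) j0)"
    have ppP: "pp \<in> PP (s i) (s j) m"
      unfolding PP_def pp_def m_def using cpath_valid[OF pw] cpath_endp ij0 disj by auto
    have "\<omega> \<in> cyl (gr True n zs \<union> gr False (s i) (fst pp) \<union> gr False (s j) (snd pp))"
      unfolding cyl_Un cyl_gr pp_def zs_def using om cpath_fol unfolding z_def w_def by simp
    then have om': "\<omega> \<in> cyl (gr True n zs \<union> gr False (endp n (take (i * D) zs)) (fst pp) \<union> gr False (endp n zs) (snd pp))"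
      using etake ezs by simp
    have ppP': "pp \<in> PP (endp n (take (i * D) zs)) (endp n zs) (endp n zs - int i')"
      using ppP etake ezs mi by simp
    have "\<omega> \<in> BadP n A (i * D) (j * D)"
      unfolding BadP_def by (rule UN_I[OF zsP], rule UN_I[OF UNIV_I[of i']], rule UN_I[OF ppP'], rule om')
    moreover have "(i, j) \<in> {p. fst p < snd p \<and> snd p \<le> K}" using ij by simp
    ultimately have "\<omega> \<in> (\<Union>p\<in>{p. fst p < snd p \<and> snd p \<le> K}. BadP n A (fst p * D) (snd p * D))"
      by (intro UN_I[of "(i, j)"]) simp_all
    with notin show False by blast
  qed
  define l where "l = (\<lambda>i. ch w (s i) (nat (s i) + 1))"
  have lT: "l i \<in> Tset z w n \<inter> {..0}" for i
  proof -
    have "inT z w (s i) (l i)" unfolding l_def by (rule inTZ_W_inT[OF ch_inTZ])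
    then have "inT z w n (l i)" unfolding s_def by (rule inTZ_Z_inT[OF ch_inTZ])
    moreover have "l i \<le> 0" unfolding l_def by (rule ch_land[OF pw])
    ultimately show ?thesis by (simp add: Tset_def)
  qed
  have inj: "inj_on l {..K}"
  proof (rule inj_onI)
    fix i j assume ij: "i \<in> {..K}" "j \<in> {..K}" "l i = l j"
    show "i = j"
    proof (rule ccontr)
      assume "i \<noteq> j"
      then consider "i < j" | "j < i" by linarith
      then show False
      proof cases
        case 1
        have "j \<le> K" using ij(2) by simp
        with noshare[OF 1 this] ij(3) show False unfolding l_def by blast
      next
        case 2
        have "i \<le> K" using ij(1) by simp
        with noshare[OF 2 this] ij(3) show False unfolding l_def by metis
      qed
    qed
  qed
  have "card (l ` {..K}) \<le> card (Tset z w n \<inter> {..0})"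
    using lT Tset_finite[OF pz pw] by (intro card_mono) auto
  then have "Suc K \<le> Lambda z w n" unfolding Lambda_def using card_image[OF inj] by simp
  with Lam show False unfolding z_def w_def by simp
qed

lemma main:
  assumes sq: "summable (\<lambda>k. r k ^ 2)"
  shows "(\<lambda>n::nat. measure M {\<omega> \<in> space M. Lambda (\<lambda>k. Zs k \<omega>) (\<lambda>k. Ws k \<omega>) (int n) \<le> K}) \<longlonglongrightarrow> 0"
proof (rule LIMSEQ_I)
  fix \<epsilon> :: real assume eps: "0 < \<epsilon>"
  define \<delta> where "\<delta> = \<epsilon> / (4 * (real K + 1) ^ 2)"
  have \<delta>: "0 < \<delta>" using eps by (simp add: \<delta>_def)
  obtain A D where AD: "1 \<le> A" "1 \<le> D"
    and pb: "\<And>a b N. A \<le> b \<Longrightarrow> b + int D \<le> a \<Longrightarrow> (\<Sum>i<N. u a (b - int i) * u b (b - int i)) \<le> \<delta>"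
    using pair_bound[OF sq \<delta>] by blast
  define L where "L = K * D"
  have "\<forall>\<^sub>F t in sequentially. norm (Fq {t..} - 0) < \<epsilon> / (4 * (real L + 1))"
    using Fq_tail eps unfolding tendsto_iff by (simp add: dist_real_def)
  then obtain t where t': "norm (Fq {t..} - 0) < \<epsilon> / (4 * (real L + 1))"
    unfolding eventually_sequentially by blast
  have t: "Fq {t..} \<le> \<epsilon> / (4 * (real L + 1))" using t' Fq_nonneg[of "{t..}"] by simp
  define Pairs where "Pairs = {p :: nat \<times> nat. fst p < snd p \<and> snd p \<le> K}"
  have finP: "finite Pairs" by (rule finite_subset[of _ "{..K} \<times> {..K}"]) (auto simp: Pairs_def)
  have cardP: "card Pairs \<le> (K + 1) ^ 2"
  proof -
    have "card Pairs \<le> card ({..K} \<times> {..K})" by (rule card_mono) (auto simp: Pairs_def)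
    then show ?thesis by (simp add: card_cartesian_product power2_eq_square)
  qed
  show "\<exists>no. \<forall>n\<ge>no. norm (measure M {\<omega> \<in> space M. Lambda (\<lambda>k. Zs k \<omega>) (\<lambda>k. Ws k \<omega>) (int n) \<le> K} - 0) < \<epsilon>"
  proof (intro exI[of _ "nat (A + int L * int t)"] allI impI)
    fix n :: nat assume n: "nat (A + int L * int t) \<le> n"
    then have nA: "A + int (K * D) * int t \<le> int n" unfolding L_def using AD by linarith
    define S where "S = {\<omega> \<in> space M. Lambda (\<lambda>k. Zs k \<omega>) (\<lambda>k. Ws k \<omega>) (int n) \<le> K}"
    define B where "B = Bad0 (int n) (K * D) t \<union> (\<Union>p\<in>Pairs. BadP (int n) A (fst p * D) (snd p * D))"
    have SB: "S \<subseteq> B" unfolding S_def B_def Pairs_def using cover[OF AD(1) nA] by blast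
    have Bmeas: "B \<in> sets M" unfolding B_def using Bad0_meas BadP_meas finP by auto
    have "emeasure M S \<le> emeasure M B" by (rule emeasure_mono[OF SB Bmeas])
    also have "\<dots> \<le> emeasure M (Bad0 (int n) (K * D) t) + emeasure M (\<Union>p\<in>Pairs. BadP (int n) A (fst p * D) (snd p * D))"
      unfolding B_def using Bad0_meas BadP_meas finP by (intro emeasure_subadditive) auto
    also have "emeasure M (\<Union>p\<in>Pairs. BadP (int n) A (fst p * D) (snd p * D)) \<le> (\<Sum>p\<in>Pairs. emeasure M (BadP (int n) A (fst p * D) (snd p * D)))"
      using BadP_meas finP by (intro emeasure_subadditive_finite) auto
    also have "\<dots> \<le> (\<Sum>p\<in>Pairs. ennreal \<delta>)"
    proof (rule sum_mono)
      fix p assume "p \<in> Pairs"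
      then have "fst p * D + D \<le> snd p * D" unfolding Pairs_def
        by (metis (no_types, lifting) add.commute mem_Collect_eq mult_Suc Suc_leI mult_le_mono1)
      then show "emeasure M (BadP (int n) A (fst p * D) (snd p * D)) \<le> ennreal \<delta>"
        using BadP_bound[OF pb _ less_imp_le[OF \<delta>]] by blast
    qed
    also have "\<dots> = ennreal (real (card Pairs) * \<delta>)" using \<delta> by (simp add: ennreal_mult' ennreal_of_nat_eq_real_of_nat)
    also have "emeasure M (Bad0 (int n) (K * D) t) \<le> ennreal (real L * Fq {t..})"
      unfolding L_def by (rule Bad0_bound)
    finally have em: "emeasure M S \<le> ennreal (real L * Fq {t..}) + ennreal (real (card Pairs) * \<delta>)"
      by (simp add: add_mono)
    have x1: "real L * Fq {t..} \<le> \<epsilon> / 4"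
    proof -
      have "real L * Fq {t..} \<le> real L * (\<epsilon> / (4 * (real L + 1)))" using t by (intro mult_left_mono) auto
      also have "\<dots> \<le> \<epsilon> / 4" using eps by (simp add: field_simps)
      finally show ?thesis .
    qed
    have x2: "real (card Pairs) * \<delta> \<le> \<epsilon> / 4"
    proof -
      have "real (card Pairs) \<le> (real K + 1) ^ 2" using cardP by (metis of_nat_le_iff of_nat_power of_nat_Suc Suc_eq_plus1 add.commute)
      then have "real (card Pairs) * \<delta> \<le> (real K + 1) ^ 2 * \<delta>" using \<delta> by (intro mult_right_mono) auto
      also have "\<dots> = \<epsilon> / 4" unfolding \<delta>_def by (simp add: field_simps)
      finally show ?thesis .
    qed
    have nn: "0 \<le> real L * Fq {t..}" "0 \<le> real (card Pairs) * \<delta>" using Fq_nonneg \<delta> by auto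
    have em2: "emeasure M S \<le> ennreal (\<epsilon> / 2)"
    proof -
      have "ennreal (real L * Fq {t..}) + ennreal (real (card Pairs) * \<delta>) = ennreal (real L * Fq {t..} + real (card Pairs) * \<delta>)"
        using nn by simp
      also have "\<dots> \<le> ennreal (\<epsilon> / 2)" using x1 x2 by (intro ennreal_leI) simp
      finally show ?thesis using em by simp
    qed
    have "measure M S = enn2real (emeasure M S)" by (simp add: measure_def)
    also have "\<dots> \<le> enn2real (ennreal (\<epsilon> / 2))" by (rule enn2real_mono[OF em2]) simp
    also have "\<dots> = \<epsilon> / 2" using eps by simp
    finally have "measure M S \<le> \<epsilon> / 2" .
    then show "norm (measure M {\<omega> \<in> space M. Lambda (\<lambda>k. Zs k \<omega>) (\<lambda>k. Ws k \<omega>) (int n) \<le> K} - 0) < \<epsilon>"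
      using eps unfolding S_def by simp
  qed
qed

end

theorem theorem6:
  fixes M :: "'a measure" and Zs Ws :: "nat \<Rightarrow> 'a \<Rightarrow> nat"
  assumes P: "prob_space M"
    and indep: "prob_space.indep_vars M (\<lambda>_. count_space UNIV)
                  (\<lambda>(b, i). if b then Zs i else Ws i) (UNIV :: (bool \<times> nat) set)"
    and distZ: "\<And>i. distr M (count_space UNIV) (Zs i) = distr M (count_space UNIV) (Zs 0)"
    and distW: "\<And>i. distr M (count_space UNIV) (Ws i) = distr M (count_space UNIV) (Zs 0)"
    and posZ: "\<And>i \<omega>. Zs i \<omega> \<ge> 1"
    and posW: "\<And>i \<omega>. Ws i \<omega> \<ge> 1"
    and infmean: "(\<integral>\<^sup>+ \<omega>. ennreal (real (min (Zs 0 \<omega>) (Ws 0 \<omega>))) \<partial>M) = \<infinity>"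
    and sq: "summable (\<lambda>n::nat. (measure M {\<omega> \<in> space M. 0 \<in> TZset (\<lambda>k. Zs k \<omega>) (int n)}) ^ 2)"
  shows "\<forall>K::nat. (\<lambda>n::nat. measure M {\<omega> \<in> space M. Lambda (\<lambda>k. Zs k \<omega>) (\<lambda>k. Ws k \<omega>) (int n) \<le> K})
            \<longlonglongrightarrow> 0"
proof
  fix K :: nat
  interpret thm6 M Zs Ws
    by (rule thm6.intro) (use P indep distZ distW posZ posW in auto)
  have "summable (\<lambda>k. r k ^ 2)" using sq unfolding r_def by simp
  then show "(\<lambda>n::nat. measure M {\<omega> \<in> space M. Lambda (\<lambda>k. Zs k \<omega>) (\<lambda>k. Ws k \<omega>) (int n) \<le> K}) \<longlonglongrightarrow> 0"
    by (rule main)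
qed


end
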